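(* Let $\varepsilon_\lambda=\frac{\log^2\lambda}{\lambda}$. As $\lambda\to\infty$, $$\mathbb{P}(J^\lambda_{2\varepsilon_\lambda}=J^\lambda)\to1\quad\text{and}\quad\mathbb{P}(I^\lambda_{2\varepsilon_\lambda}=I^\lambda)\to1.$$ Moreover, with probability tending to $1$, $J^\lambda\subset\mathbb{B}_{2\varepsilon_\lambda}$ and $I^\lambda\subset\mathbb{B}_{2\varepsilon_\lambda}$.
   Context: $\mathbb{B}$ closed unit ball in $\mathbb{R}^d$ ($d\ge2$), $\mathbb{B}_r=\{x:\|x\|<r\}$. Shells: $\mathrm{Sh}^-(\varepsilon)=\{x:\|x\|\in(1-\varepsilon,1)\}$, $\mathrm{Sh}^+(\varepsilon)=\{x:\|x\|\in(1,1+\varepsilon)\}$, $\mathrm{Sh}(\varepsilon)=\mathrm{Sh}^-(\varepsilon)\cup\partial\mathbb{B}\cup\mathrm{Sh}^+(\varepsilon)$. Tessellation model: $\mathcal X_\lambda$ is a Poisson point process on $\mathbb{R}^d$ of intensity $\lambda/2$ (times Lebesgue); $J^\lambda$ is the (closure of the) connected component of the origin in $\mathbb{R}^d\setminus\bigcup_{x\in\mathcal X_\lambda}(x+\partial\mathbb{B})$, and $J^\lambda_\varepsilon$ is the same with $\mathcal X_\lambda$ replaced by $\mathcal X_\lambda\cap\mathrm{Sh}(\varepsilon)$. Intersection model: $\mathcal{C}_\lambda$ is a Poisson point process on $\mathbb{B}$ of intensity $\lambda$, $I^\lambda=\bigcap_{c\in\mathcal C_\lambda}(c+\mathbb{B})$,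 and $I^\lambda_\varepsilon=\bigcap_{c\in\mathcal C_\lambda\cap\mathrm{Sh}^-(\varepsilon)}(c+\mathbb{B})$. *)

theory Defs
  imports "HOL-Probability.Probability"
begin

definition poisson_pp :: "'b measure \<Rightarrow> ('b \<Rightarrow> 'a::euclidean_space set) \<Rightarrow> 'a set \<Rightarrow> real \<Rightarrow> bool" where
  "poisson_pp M X W c \<longleftrightarrow>
     prob_space M \<and>
     (\<forall>\<omega>\<in>space M. X \<omega> \<subseteq> W \<and> (\<forall>K. bounded K \<longrightarrow> finite (X \<omega> \<inter> K))) \<and>
     (\<forall>A. A \<in> sets borel \<and> bounded A \<and> A \<subseteq> W \<longrightarrow>
        (\<lambda>\<omega>. card (X \<omega> \<inter> A)) \<in> measurable M (count_space UNIV) \<and>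
        (\<forall>k::nat. measure M {\<omega>\<in>space M. card (X \<omega> \<inter> A) = k} =
            exp (- (c * measure lborel A)) * (c * measure lborel A) ^ k / fact k)) \<and>
     (\<forall>I (A :: nat \<Rightarrow> 'a set). finite I \<and> disjoint_family_on A I \<and>
        (\<forall>i\<in>I. A i \<in> sets borel \<and> bounded (A i) \<and> A i \<subseteq> W) \<longrightarrow>
        prob_space.indep_vars M (\<lambda>_. count_space UNIV) (\<lambda>i \<omega>. card (X \<omega> \<inter> A i)) I)"

definition shell_in :: "real \<Rightarrow> 'a::euclidean_space set" where
  "shell_in e = {x. 1 - e < norm x \<and> norm x < 1}"

definition shell_out :: "real \<Rightarrow> 'a::euclidean_space set" where
  "shell_out e = {x. 1 < norm x \<and> norm x < 1 + e}"

definition shell :: "real \<Rightarrow> 'a::euclidean_space set" where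
  "shell e = shell_in e \<union> sphere 0 1 \<union> shell_out e"

definition tess_cell :: "'a::euclidean_space set \<Rightarrow> 'a set" where
  "tess_cell X = closure (connected_component_set (- (\<Union>x\<in>X. sphere x 1)) 0)"

definition inter_cell :: "'a::euclidean_space set \<Rightarrow> 'a set" where
  "inter_cell C = (\<Inter>c\<in>C. cball c 1)"

definition eps_lam :: "real \<Rightarrow> real" where
  "eps_lam l = (ln l)^2 / l"

text \<open>Probability of an event tends to 1 as l tends to infinity (inner probability, so
no measurability issue arises: measurable sub-events of probability close to 1 exist).\<close>
definition prob_to_one :: "(real \<Rightarrow> 'b measure) \<Rightarrow> (real \<Rightarrow> 'b \<Rightarrow> bool) \<Rightarrow> bool" where
  "prob_to_one M P \<longleftrightarrow> (\<forall>\<delta>>0. eventually (\<lambda>l. \<exists>E\<in>sets (M l).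
       E \<subseteq> {\<omega>\<in>space (M l). P l \<omega>} \<and> measure (M l) E \<ge> 1 - \<delta>) at_top)"

end

theory Submission
  imports Defs "HOL-Real_Asymp.Real_Asymp"
begin


definition Rg :: "'a::euclidean_space \<Rightarrow> real \<Rightarrow> 'a set" where
  "Rg u r = {x. norm x < - 2 * (x \<bullet> u) \<and> 1 - r/8 < norm x \<and> norm x \<le> 1 - r/16}"

lemma G1:
  fixes x y u :: "'a::euclidean_space"
  assumes u: "norm u = 1" and x: "x \<in> Rg u r" and r: "0 < r" "r \<le> 1"
    and y: "norm y = r" and yu: "norm (y - r *\<^sub>R u) < r/4"
  shows "norm x < 1 \<and> 1 - r/8 < norm x \<and> norm (x - y) > 1"
proof -
  have x1: "norm x < - 2 * (x \<bullet> u)" and x2: "1 - r/8 < norm x" and x3: "norm x \<le> 1 - r/16"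
    using x by (auto simp: Rg_def)
  have "x \<bullet> y = r * (x \<bullet> u) + x \<bullet> (y - r *\<^sub>R u)"
    by (simp add: inner_diff_right)
  also have "x \<bullet> (y - r *\<^sub>R u) \<le> norm x * (r/4)"
    using norm_cauchy_schwarz[of x "y - r *\<^sub>R u"] mult_left_mono[OF less_imp_le[OF yu], of "norm x"]
    by simp
  finally have xy: "x \<bullet> y \<le> r * (x \<bullet> u) + norm x * (r/4)" by simp
  have "r * (x \<bullet> u) < - r * norm x / 2" using mult_strict_left_mono[OF x1, of r] r by (simp add: algebra_simps)
  moreover have "norm x * (r/4) = r * norm x / 4" "- r * norm x / 2 = - (r * norm x) / 2" by simp_all
  ultimately have xy2: "x \<bullet> y < - r * norm x / 4" using xy by linarith
  have "(norm (x - y))^2 = (norm x)^2 - 2 * (x \<bullet> y) + r^2"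
    using y dot_norm_neg[of x y] by simp
  also have "\<dots> > (norm x)^2 + r * norm x / 2" 
  proof -
    have "r^2 > 0" using r by simp
    thus ?thesis using xy2 by linarith
  qed
  finally have A: "(norm (x - y))^2 > (norm x)^2 + r * norm x / 2" .
  have "(norm x)^2 + r * norm x / 2 \<ge> (1 - r/8)^2 + r * (1 - r/8) / 2"
    using x2 r by (intro add_mono power_mono divide_right_mono mult_left_mono) auto
  moreover have "(1 - r/8)^2 + r * (1 - r/8) / 2 > 1" using r by (simp add: power2_eq_square field_simps)
  ultimately have "(norm (x - y))^2 > 1^2" using A by simp
  hence "norm (x - y) > 1" by (smt (verit) norm_ge_zero power_mono)
  moreover have "norm x < 1" using x3 r by linarith
  ultimately show ?thesis using x2 by simp
qed

definition Kc :: "'a::euclidean_space \<Rightarrow> 'a set" where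
  "Kc u = {x. norm x < - 2 * (x \<bullet> u)}"

lemma Rg_eq: "0 < r \<Longrightarrow> Rg u r = (Kc u \<inter> cball 0 (1 - r/16)) - (Kc u \<inter> cball 0 (1 - r/8))"
  by (auto simp: Rg_def Kc_def)

lemma Kc_open: "open (Kc u)"
  unfolding Kc_def by (intro open_Collect_less continuous_intros)

lemma Kc_scale:
  assumes s: "s > 0"
  shows "Kc u \<inter> cball 0 s = (*\<^sub>R) s ` (Kc u \<inter> cball 0 1)"
proof (rule set_eqI, rule iffI)
  fix x assume x: "x \<in> Kc u \<inter> cball 0 s"
  have "(1/s) *\<^sub>R x \<in> Kc u \<inter> cball 0 1"
    using x s by (auto simp: Kc_def field_simps)
  moreover have "x = s *\<^sub>R ((1/s) *\<^sub>R x)" using s by simp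
  ultimately show "x \<in> (*\<^sub>R) s ` (Kc u \<inter> cball 0 1)" by blast
next
  fix x assume "x \<in> (*\<^sub>R) s ` (Kc u \<inter> cball 0 1)"
  then obtain z where z: "z \<in> Kc u" "norm z \<le> 1" and xz: "x = s *\<^sub>R z" by auto
  have "norm x \<le> s" using z s xz by (simp add: mult_left_le)
  moreover have "norm x < - 2 * (x \<bullet> u)"
  proof -
    have "s * norm z < s * (- 2 * (z \<bullet> u))" using z s by (intro mult_strict_left_mono) (auto simp: Kc_def)
    thus ?thesis using s xz by (simp add: algebra_simps)
  qed
  ultimately show "x \<in> Kc u \<inter> cball 0 s" by (simp add: Kc_def)
qed

lemma Kc_ball:
  assumes u: "norm u = 1"
  shows "ball (- (1/2) *\<^sub>R u) (1/8) \<subseteq> Kc u \<inter> cball 0 1"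
proof
  fix x assume "x \<in> ball (- (1/2) *\<^sub>R u) (1/8)"
  then obtain v where v: "norm v < 1/8" and xv: "x = - (1/2) *\<^sub>R u + v"
    by (metis add.commute diff_add_cancel dist_norm mem_ball norm_minus_commute)
  have nx: "norm x \<le> 1/2 + norm v" using xv u by (metis norm_triangle_ineq norm_minus_cancel norm_scaleR abs_divide abs_one abs_numeral mult_1_right scaleR_minus_left)
  have "v \<bullet> u \<le> norm v" using u norm_cauchy_schwarz[of v u] by simp
  moreover have "u \<bullet> u = 1" using u by (simp add: dot_square_norm)
  ultimately have "x \<bullet> u \<le> - 1/2 + norm v" using xv by (simp add: inner_diff_left)
  thus "x \<in> Kc u \<inter> cball 0 1" using nx v by (simp add: Kc_def)
qed

lemma pow_diff_ge:
  fixes a b :: real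
  assumes "0 \<le> a" "a \<le> b"
  shows "b ^ Suc n - a ^ Suc n \<ge> (b - a) * a ^ n"
proof (induction n)
  case 0 then show ?case by simp
next
  case (Suc n)
  have "b ^ Suc (Suc n) - a ^ Suc (Suc n) = b * (b ^ Suc n - a ^ Suc n) + (b - a) * a ^ Suc n"
    by (simp add: algebra_simps)
  moreover have "b * (b ^ Suc n - a ^ Suc n) \<ge> 0"
  proof -
    have "a ^ Suc n \<le> b ^ Suc n" using assms by (intro power_mono) auto
    thus ?thesis using assms by (intro mult_nonneg_nonneg) auto
  qed
  ultimately show ?case by simp
qed

lemma G3:
  fixes u :: "'a::euclidean_space"
  assumes u: "norm u = 1" and r: "0 < r" "r \<le> 1"
  shows "Rg u r \<in> sets borel" "bounded (Rg u r)" "Rg u r \<subseteq> ball 0 1"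
    "measure lborel (Rg u r) \<ge> measure lborel (ball (0::'a) (1/8)) / 2 ^ (DIM('a) - 1) / 16 * r"
proof -
  let ?d = "DIM('a)"
  have KB: "Kc u \<inter> cball 0 s \<in> sets borel" for s
    using Kc_open by (intro sets.Int borel_open borel_closed) auto
  show B: "Rg u r \<in> sets borel" unfolding Rg_eq[OF r(1)] using KB by (intro sets.Diff)
  show "Rg u r \<subseteq> ball 0 1" using r by (auto simp: Rg_def)
  then show "bounded (Rg u r)" by (meson bounded_ball bounded_subset)
  define m1 where "m1 = measure lebesgue (Kc u \<inter> cball (0::'a) 1)"
  have sc: "measure lebesgue (Kc u \<inter> cball 0 s) = s ^ ?d * m1" if "s > 0" for s
    using measure_lebesgue_affine[of s 0 "Kc u \<inter> cball 0 1"] that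
    by (simp add: Kc_scale[OF that] m1_def)
  have fin: "emeasure lborel (Kc u \<inter> cball (0::'a) s) < \<infinity>" for s
    by (rule le_less_trans[OF emeasure_mono emeasure_lborel_cball_finite]) auto
  have "measure lborel (ball (0::'a) (1/8)) = measure lborel (ball (- (1/2) *\<^sub>R u) (1/8))"
  proof -
    have e: "(+) (- (1/2) *\<^sub>R u) ` ball 0 (1/8) = ball (- (1/2) *\<^sub>R u) (1/8)"
      by (metis add.right_neutral ball_translation)
    have "measure lebesgue (ball (- (1/2) *\<^sub>R u) (1/8)) = measure lebesgue (ball (0::'a) (1/8))"
      using measure_translation[of "- (1/2) *\<^sub>R u" "ball (0::'a) (1/8)"] unfolding e .
    then show ?thesis
      using measure_completion[OF borel_open[OF open_ball], of 0 "1/8"]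
        measure_completion[OF borel_open[OF open_ball], of "- (1/2) *\<^sub>R u" "1/8"] by simp
  qed
  also have "\<dots> \<le> measure lborel (Kc u \<inter> cball 0 1)"
    using Kc_ball[OF u] KB fin
    by (intro measure_mono_fmeasurable) (auto simp: fmeasurable_def)
  also have "\<dots> = m1" unfolding m1_def using KB by simp
  finally have m1b: "measure lborel (ball (0::'a) (1/8)) \<le> m1" .
  have "measure lborel (Rg u r) = measure lborel (Kc u \<inter> cball 0 (1 - r/16)) - measure lborel (Kc u \<inter> cball 0 (1 - r/8))"
    unfolding Rg_eq[OF r(1)] using KB fin[of "1 - r/16"] r
    by (intro measure_Diff) (auto simp: fmeasurable_def)
  also have "\<dots> = ((1 - r/16) ^ ?d - (1 - r/8) ^ ?d) * m1"
    using sc[of "1 - r/16"] sc[of "1 - r/8"] KB r by (simp add: algebra_simps)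
  finally have eq: "measure lborel (Rg u r) = ((1 - r/16) ^ ?d - (1 - r/8) ^ ?d) * m1" .
  have dpos: "?d = Suc (?d - 1)" by simp
  have "(1 - r/16) ^ ?d - (1 - r/8) ^ ?d \<ge> (r/16) * (1 - r/8) ^ (?d - 1)"
    using pow_diff_ge[of "1 - r/8" "1 - r/16" "?d - 1"] r dpos by (simp add: algebra_simps)
  moreover have "(1 - r/8) ^ (?d - 1) \<ge> (1/2) ^ (?d - 1)"
    using r by (intro power_mono) auto
  ultimately have pd: "(1 - r/16) ^ ?d - (1 - r/8) ^ ?d \<ge> (r/16) * (1/2) ^ (?d - 1)"
    using r mult_left_mono[of "(1/2) ^ (?d - 1)" "(1 - r/8) ^ (?d - 1)" "r/16"] by linarith
  have c0: "measure lborel (ball (0::'a) (1/8)) \<ge> 0" by simp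
  have "measure lborel (ball (0::'a) (1/8)) / 2 ^ (?d - 1) / 16 * r = ((r/16) * (1/2) ^ (?d - 1)) * measure lborel (ball (0::'a) (1/8))"
    by (simp add: field_simps)
  also have "\<dots> \<le> ((1 - r/16) ^ ?d - (1 - r/8) ^ ?d) * m1"
    using pd m1b c0 r by (intro mult_mono) auto
  finally show "measure lborel (Rg u r) \<ge> measure lborel (ball (0::'a) (1/8)) / 2 ^ (DIM('a) - 1) / 16 * r"
    using eq by simp
qed

lemma net:
  "\<exists>U. finite U \<and> U \<subseteq> sphere (0::'a::euclidean_space) 1 \<and> (\<forall>v\<in>sphere 0 1. \<exists>u\<in>U. norm (v - u) < 1/4)"
proof -
  have "compact (sphere (0::'a) 1)" by simp
  moreover have "\<And>x. x \<in> sphere (0::'a) 1 \<Longrightarrow> open (ball x (1/4))" by simp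
  moreover have "sphere (0::'a) 1 \<subseteq> (\<Union>x\<in>sphere 0 1. ball x (1/4))" by force
  ultimately obtain U where "U \<subseteq> sphere 0 1" "finite U" "sphere (0::'a) 1 \<subseteq> (\<Union>x\<in>U. ball x (1/4))"
    by (rule compactE_image) blast
  then show ?thesis by (force simp: dist_norm norm_minus_commute)
qed

lemma P1:
  fixes X :: "'b \<Rightarrow> 'a::euclidean_space set" and A :: "'u \<Rightarrow> 'a set"
  assumes pp: "poisson_pp M X W c" and U: "finite U"
    and A: "\<And>u. u \<in> U \<Longrightarrow> A u \<in> sets borel \<and> bounded (A u) \<and> A u \<subseteq> W"
    and B: "B \<in> sets borel" "bounded B" "B \<subseteq> W" "measure lborel B = 0"
  shows "\<exists>E\<in>sets M. E \<subseteq> {\<omega>\<in>space M. (\<forall>u\<in>U. X \<omega> \<inter> A u \<noteq> {}) \<and> X \<omega> \<inter> B = {}} \<and>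
     measure M E \<ge> 1 - (\<Sum>u\<in>U. exp (- (c * measure lborel (A u))))"
proof -
  interpret prob_space M using pp by (simp add: poisson_pp_def)
  have fin: "\<And>\<omega> K. \<omega> \<in> space M \<Longrightarrow> bounded K \<Longrightarrow> finite (X \<omega> \<inter> K)"
    using pp by (simp add: poisson_pp_def)
  have meas: "\<And>S. S \<in> sets borel \<Longrightarrow> bounded S \<Longrightarrow> S \<subseteq> W \<Longrightarrow>
     (\<lambda>\<omega>. card (X \<omega> \<inter> S)) \<in> measurable M (count_space UNIV) \<and>
     (\<forall>k::nat. measure M {\<omega>\<in>space M. card (X \<omega> \<inter> S) = k} =
            exp (- (c * measure lborel S)) * (c * measure lborel S) ^ k / fact k)"
    using pp unfolding poisson_pp_def by blast
  define F where "F u = {\<omega>\<in>space M. card (X \<omega> \<inter> A u) = 0}" for u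
  define G where "G = {\<omega>\<in>space M. card (X \<omega> \<inter> B) \<noteq> 0}"
  have Fs: "F u \<in> sets M" if "u \<in> U" for u
  proof -
    have "(\<lambda>\<omega>. card (X \<omega> \<inter> A u)) -` {0} \<inter> space M \<in> sets M"
      using meas[of "A u"] A[OF that] by (intro measurable_sets) auto
    moreover have "(\<lambda>\<omega>. card (X \<omega> \<inter> A u)) -` {0} \<inter> space M = F u" by (auto simp: F_def)
    ultimately show ?thesis by simp
  qed
  have Fm: "measure M (F u) = exp (- (c * measure lborel (A u)))" if "u \<in> U" for u
    using meas[of "A u"] A[OF that] unfolding F_def by auto
  have Gs: "G \<in> sets M"
  proof -
    have "(\<lambda>\<omega>. card (X \<omega> \<inter> B)) -` (- {0}) \<inter> space M \<in> sets M"
      using meas[of B] B by (intro measurable_sets) auto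
    moreover have "(\<lambda>\<omega>. card (X \<omega> \<inter> B)) -` (- {0}) \<inter> space M = G" by (auto simp: G_def)
    ultimately show ?thesis by simp
  qed
  have G0s: "{\<omega>\<in>space M. card (X \<omega> \<inter> B) = 0} \<in> sets M"
  proof -
    have "(\<lambda>\<omega>. card (X \<omega> \<inter> B)) -` {0} \<inter> space M \<in> sets M"
      using meas[of B] B by (intro measurable_sets) auto
    moreover have "(\<lambda>\<omega>. card (X \<omega> \<inter> B)) -` {0} \<inter> space M = {\<omega>\<in>space M. card (X \<omega> \<inter> B) = 0}" by auto
    ultimately show ?thesis by simp
  qed
  have "G = space M - {\<omega>\<in>space M. card (X \<omega> \<inter> B) = 0}" by (auto simp: G_def)
  hence Gm: "measure M G = 0"
    using prob_compl[OF G0s] meas[of B] B by simp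
  define E where "E = space M - ((\<Union>u\<in>U. F u) \<union> G)"
  have Us: "(\<Union>u\<in>U. F u) \<in> sets M" using Fs U by blast
  have Es: "E \<in> sets M" unfolding E_def using Us Gs by blast
  have "measure M ((\<Union>u\<in>U. F u) \<union> G) \<le> measure M (\<Union>u\<in>U. F u) + measure M G"
    using Us Gs by (rule measure_Un_le)
  also have "\<dots> \<le> (\<Sum>u\<in>U. measure M (F u))" using measure_UNION_le[OF U, of F] Fs Gm by auto
  also have "\<dots> = (\<Sum>u\<in>U. exp (- (c * measure lborel (A u))))" using Fm by simp
  finally have le: "measure M ((\<Union>u\<in>U. F u) \<union> G) \<le> (\<Sum>u\<in>U. exp (- (c * measure lborel (A u))))" .
  have "measure M E = 1 - measure M ((\<Union>u\<in>U. F u) \<union> G)"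
    unfolding E_def using Us Gs by (intro prob_compl) blast
  hence "measure M E \<ge> 1 - (\<Sum>u\<in>U. exp (- (c * measure lborel (A u))))" using le by simp
  moreover have "E \<subseteq> {\<omega>\<in>space M. (\<forall>u\<in>U. X \<omega> \<inter> A u \<noteq> {}) \<and> X \<omega> \<inter> B = {}}"
  proof safe
    fix \<omega> assume "\<omega> \<in> E" then show "\<omega> \<in> space M" by (simp add: E_def)
  next
    fix \<omega> u assume "\<omega> \<in> E" "u \<in> U" "X \<omega> \<inter> A u = {}"
    then show False by (auto simp: E_def F_def)
  next
    fix \<omega> x assume w: "\<omega> \<in> E" and x: "x \<in> X \<omega>" "x \<in> B"
    have "\<omega> \<in> space M" "card (X \<omega> \<inter> B) = 0" using w by (auto simp: E_def G_def)
    moreover have "finite (X \<omega> \<inter> B)" using fin[OF \<open>\<omega> \<in> space M\<close> B(2)] .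
    ultimately show "x \<in> {}" using x by auto
  qed
  ultimately show ?thesis using Es by blast
qed





lemma ivt_conn:
  fixes f :: "'a::topological_space \<Rightarrow> real"
  assumes "connected T" "continuous_on T f" "a \<in> T" "b \<in> T" "f a \<le> t" "t \<le> f b"
  shows "\<exists>z\<in>T. f z = t"
proof -
  have "connected (f ` T)" using assms by (intro connected_continuous_image)
  moreover have "f a \<in> f ` T" "f b \<in> f ` T" using assms by auto
  ultimately have "t \<in> f ` T" using assms connectedD_interval[of "f ` T" "f a" "f b" t] by blast
  then show ?thesis by auto
qed

definition sepP :: "real \<Rightarrow> 'a::euclidean_space set \<Rightarrow> bool" where
  "sepP r Z \<longleftrightarrow> (\<forall>y. norm y = r \<longrightarrow> (\<exists>x\<in>Z. norm x < 1 \<and> norm (x - y) > 1))"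

lemma comp_small:
  fixes Z :: "'a::euclidean_space set"
  assumes r: "r > 0" and sep: "sepP r Z"
  shows "connected_component_set (- (\<Union>x\<in>Z. sphere x 1)) 0 \<subseteq> ball 0 r"
proof
  let ?S = "- (\<Union>x\<in>Z. sphere x 1)"
  let ?C = "connected_component_set ?S 0"
  fix z assume z: "z \<in> ?C"
  show "z \<in> ball 0 r"
  proof (rule ccontr)
    assume "z \<notin> ball 0 r"
    hence zr: "norm z \<ge> r" by simp
    have 0: "0 \<in> ?C" using z connected_component_in[of ?S 0 z] by simp
    have cn: "continuous_on ?C norm" by (intro continuous_intros)
    have "norm (0::'a) \<le> r" using r by simp
    then obtain y where y: "y \<in> ?C" "norm y = r"
      using ivt_conn[OF connected_connected_component cn 0 z _ zr] by blast
    obtain x where x: "x \<in> Z" "norm x < 1" "norm (x - y) > 1" using sep y(2) unfolding sepP_def by blast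
    have cont: "continuous_on ?C (\<lambda>w. norm (w - x))" by (intro continuous_intros)
    have "norm (0 - x) \<le> 1" "1 \<le> norm (y - x)" using x by (auto simp: norm_minus_commute)
    then obtain w where w: "w \<in> ?C" "norm (w - x) = 1"
      using ivt_conn[OF connected_connected_component cont 0 y(1)] by blast
    have "w \<in> ?S" using w(1) connected_component_in[of ?S 0 w] by simp
    moreover have "w \<in> sphere x 1" using w(2) by (simp add: dist_norm norm_minus_commute)
    ultimately show False using x(1) by blast
  qed
qed

lemma tess_small:
  fixes Z :: "'a::euclidean_space set"
  assumes r: "r > 0" and sep: "sepP r Z"
  shows "tess_cell Z \<subseteq> cball 0 r"
  unfolding tess_cell_def using closure_mono[OF comp_small[OF assms]] r by simp


lemma tess_eq:
  fixes Z :: "'a::euclidean_space set"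
  assumes r: "r > 0" and sep: "sepP r Y" and YZ: "Y \<subseteq> Z" and re: "r \<le> e"
    and far: "\<And>x. x \<in> Z \<Longrightarrow> x \<notin> Y \<Longrightarrow> norm x \<le> 1 - e \<or> norm x \<ge> 1 + e"
  shows "tess_cell Y = tess_cell Z"
proof -
  let ?SY = "- (\<Union>x\<in>Y. sphere x 1)" and ?SZ = "- (\<Union>x\<in>Z. sphere x 1)"
  have "connected_component_set ?SZ 0 \<subseteq> connected_component_set ?SY 0"
    using YZ by (intro connected_component_mono) blast
  moreover have "connected_component_set ?SY 0 \<subseteq> connected_component_set ?SZ 0"
  proof (cases "0 \<in> ?SY")
    case False
    then show ?thesis using connected_component_in by fastforce
  next
    case True
    have sm: "connected_component_set ?SY 0 \<subseteq> ball 0 r" using comp_small[OF r sep] .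
    have "connected_component_set ?SY 0 \<subseteq> ?SZ"
    proof
      fix w assume w: "w \<in> connected_component_set ?SY 0"
      have wY: "w \<in> ?SY" using w connected_component_in by fastforce
      have wr: "norm w < r" using w sm by auto
      show "w \<in> ?SZ"
      proof (rule ComplI)
        assume "w \<in> (\<Union>x\<in>Z. sphere x 1)"
        then obtain x where x: "x \<in> Z" "norm (x - w) = 1" by (auto simp: dist_norm)
        have "x \<notin> Y" using wY x by (auto simp: dist_norm)
        with far[OF x(1)] have "norm x \<le> 1 - e \<or> norm x \<ge> 1 + e" by blast
        moreover have "norm (x - w) \<le> norm x + norm w" by (rule norm_triangle_ineq4)
        moreover have "norm x \<le> norm (x - w) + norm w" by (metis diff_add_cancel norm_triangle_ineq)
        ultimately show False using x(2) wr re by linarith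
      qed
    qed
    then show ?thesis using True by (intro connected_component_maximal) auto
  qed
  ultimately show ?thesis unfolding tess_cell_def by simp
qed

lemma inter_small:
  fixes Z :: "'a::euclidean_space set"
  assumes r: "r > 0" and sep: "sepP r Z" and Z: "Z \<subseteq> cball 0 1"
  shows "inter_cell Z \<subseteq> ball 0 r"
proof
  fix z assume z: "z \<in> inter_cell Z"
  show "z \<in> ball 0 r"
  proof (rule ccontr)
    assume "z \<notin> ball 0 r"
    hence zr: "norm z \<ge> r" by simp
    have cv: "convex (inter_cell Z)" unfolding inter_cell_def by (intro convex_INT) auto
    have 0: "0 \<in> inter_cell Z" using Z by (auto simp: inter_cell_def dist_norm)
    define t where "t = r / norm z"
    have t: "0 \<le> t" "t \<le> 1" "norm z > 0" using zr r by (auto simp: t_def divide_le_eq_1)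
    have "(1 - t) *\<^sub>R 0 + t *\<^sub>R z \<in> inter_cell Z" using t by (intro convexD[OF cv 0 z]) auto
    hence y: "t *\<^sub>R z \<in> inter_cell Z" by simp
    have "norm (t *\<^sub>R z) = r" using t r by (simp add: t_def)
    then obtain x where x: "x \<in> Z" "norm (x - t *\<^sub>R z) > 1" using sep unfolding sepP_def by blast
    then show False using y by (auto simp: inter_cell_def dist_norm)
  qed
qed

lemma inter_eq:
  fixes Z :: "'a::euclidean_space set"
  assumes r: "r > 0" and sep: "sepP r Y" and YZ: "Y \<subseteq> Z" and Z: "Z \<subseteq> cball 0 1" and re: "r \<le> e"
    and far: "\<And>x. x \<in> Z \<Longrightarrow> x \<notin> Y \<Longrightarrow> norm x \<le> 1 - e"
  shows "inter_cell Y = inter_cell Z"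
proof
  show "inter_cell Z \<subseteq> inter_cell Y" using YZ by (auto simp: inter_cell_def)
  show "inter_cell Y \<subseteq> inter_cell Z"
  proof
    fix w assume w: "w \<in> inter_cell Y"
    have "Y \<subseteq> cball 0 1" using YZ Z by blast
    hence wr: "norm w < r" using inter_small[OF r sep] w by auto
    show "w \<in> inter_cell Z" unfolding inter_cell_def
    proof
      fix x assume x: "x \<in> Z"
      show "w \<in> cball x 1"
      proof (cases "x \<in> Y")
        case True then show ?thesis using w by (auto simp: inter_cell_def)
      next
        case False
        have "norm (x - w) \<le> norm x + norm w" by (rule norm_triangle_ineq4)
        then show ?thesis using far[OF x False] wr re by (simp add: dist_norm)
      qed
    qed
  qed
qed




definition kap :: "'a::euclidean_space itself \<Rightarrow> real" where
  "kap _ = measure lborel (ball (0::'a) (1/8)) / 2 ^ (DIM('a) - 1) / 16"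

lemma kap_pos: "kap TYPE('a::euclidean_space) > 0"
  using content_ball_pos[of "1/8" "0::'a"] by (simp add: kap_def)

lemma sphere_null: "measure lborel (sphere (0::'a::euclidean_space) 1) = 0"
proof -
  from negligible_sphere[of "0::'a" 1] have "sphere (0::'a) 1 \<in> null_sets lborel"
    by (auto simp: null_sets_completion_iff negligible_iff_null_sets negligible_convex_frontier)
  then show ?thesis by (simp add: measure_eq_0_null_sets)
qed

lemma sep_from:
  fixes Z :: "'a::euclidean_space set"
  assumes U: "U \<subseteq> sphere 0 1" "\<forall>v\<in>sphere 0 1. \<exists>u\<in>U. norm (v - u) < 1/4"
    and r: "0 < r" "r \<le> 1" and Z: "\<forall>u\<in>U. Z \<inter> Rg u r \<noteq> {}"
  shows "sepP r (Z \<inter> shell_in (2 * r))"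
  unfolding sepP_def
proof (intro allI impI)
  fix y :: 'a assume y: "norm y = r"
  have "(1/r) *\<^sub>R y \<in> sphere 0 1" using y r by simp
  then obtain u where u: "u \<in> U" "norm ((1/r) *\<^sub>R y - u) < 1/4" using U by blast
  have "norm (y - r *\<^sub>R u) = r * norm ((1/r) *\<^sub>R y - u)"
  proof -
    have "y - r *\<^sub>R u = r *\<^sub>R ((1/r) *\<^sub>R y - u)" using r by (simp add: algebra_simps)
    then show ?thesis using r by simp
  qed
  also have "\<dots> < r / 4" using u r by simp
  finally have yu: "norm (y - r *\<^sub>R u) < r / 4" .
  obtain x where x: "x \<in> Z" "x \<in> Rg u r" using Z u by blast
  have nu: "norm u = 1" using U u by auto
  have g: "norm x < 1 \<and> 1 - r/8 < norm x \<and> norm (x - y) > 1" using G1[OF nu x(2) r y yu] .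
  hence "x \<in> shell_in (2 * r)" using r by (simp add: shell_in_def)
  then show "\<exists>x\<in>Z \<inter> shell_in (2 * r). norm x < 1 \<and> 1 < norm (x - y)" using x g by blast
qed

lemma PP:
  fixes X :: "'b \<Rightarrow> 'a::euclidean_space set" and U :: "'a set"
  assumes pp: "poisson_pp M X W c" and c: "c \<ge> 0" and W: "cball 0 1 \<subseteq> W"
    and U: "finite U" "U \<subseteq> sphere 0 1" "\<forall>v\<in>sphere 0 1. \<exists>u\<in>U. norm (v - u) < 1/4"
    and r: "0 < r" "r \<le> 1"
    and B: "B \<in> sets borel" "bounded B" "B \<subseteq> W" "measure lborel B = 0"
  shows "\<exists>E\<in>sets M. E \<subseteq> {\<omega>\<in>space M. sepP r (X \<omega> \<inter> shell_in (2 * r)) \<and> X \<omega> \<inter> B = {}} \<and>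
     measure M E \<ge> 1 - card U * exp (- (c * (kap TYPE('a) * r)))"
proof -
  have A: "Rg u r \<in> sets borel \<and> bounded (Rg u r) \<and> Rg u r \<subseteq> W" if "u \<in> U" for u
  proof -
    have nu: "norm u = 1" using that U by auto
    have "Rg u r \<subseteq> W" using G3(3)[OF nu r] W ball_subset_cball[of "0::'a" 1] by blast
    then show ?thesis using G3(1,2)[OF nu r] by blast
  qed
  from P1[OF pp U(1) A B] obtain E where E1: "E \<in> sets M" and
    E23: "E \<subseteq> {\<omega>\<in>space M. (\<forall>u\<in>U. X \<omega> \<inter> Rg u r \<noteq> {}) \<and> X \<omega> \<inter> B = {}} \<and>
    measure M E \<ge> 1 - (\<Sum>u\<in>U. exp (- (c * measure lborel (Rg u r))))"
    by (rule bexE)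
  note E = E1 conjunct1[OF E23] conjunct2[OF E23]
  have "(\<Sum>u\<in>U. exp (- (c * measure lborel (Rg u r)))) \<le> (\<Sum>u\<in>U. exp (- (c * (kap TYPE('a) * r))))"
  proof (rule sum_mono)
    fix u assume "u \<in> U"
    hence "measure lborel (Rg u r) \<ge> kap TYPE('a) * r" using G3(4)[of u r] U r by (auto simp: kap_def)
    hence "c * (kap TYPE('a) * r) \<le> c * measure lborel (Rg u r)" using c by (intro mult_left_mono)
    then show "exp (- (c * measure lborel (Rg u r))) \<le> exp (- (c * (kap TYPE('a) * r)))" by simp
  qed
  hence "measure M E \<ge> 1 - card U * exp (- (c * (kap TYPE('a) * r)))" using E(3) by simp
  moreover have "E \<subseteq> {\<omega>\<in>space M. sepP r (X \<omega> \<inter> shell_in (2 * r)) \<and> X \<omega> \<inter> B = {}}"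
  proof
    fix \<omega> assume w: "\<omega> \<in> E"
    have "\<forall>u\<in>U. X \<omega> \<inter> Rg u r \<noteq> {}" using E(2) w by blast
    hence "sepP r (X \<omega> \<inter> shell_in (2 * r))" by (rule sep_from[OF U(2,3) r])
    then show "\<omega> \<in> {\<omega>\<in>space M. sepP r (X \<omega> \<inter> shell_in (2 * r)) \<and> X \<omega> \<inter> B = {}}"
      using E(2) w by blast
  qed
  ultimately show ?thesis using E(1) by blast
qed

lemma asym1: "((\<lambda>l. eps_lam l) \<longlongrightarrow> 0) at_top"
  unfolding eps_lam_def by real_asymp

lemma asym2: assumes "k > (0::real)" shows "((\<lambda>l::real. exp (- (k * (ln l)^2))) \<longlongrightarrow> 0) at_top"
  using assms by real_asymp




lemma to_one:
  assumes H: "\<forall>\<^sub>F l in at_top. \<exists>E\<in>sets (M l). E \<subseteq> {\<omega>\<in>space (M l). P l \<omega>} \<and> measure (M l) E \<ge> 1 - f l"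
    and f: "(f \<longlongrightarrow> 0) at_top"
  shows "prob_to_one M P"
  unfolding prob_to_one_def
proof (intro allI impI)
  fix \<delta> :: real assume d: "\<delta> > 0"
  have "\<forall>\<^sub>F l in at_top. f l < \<delta>" using order_tendstoD(2)[OF f d] .
  then show "\<forall>\<^sub>F l in at_top. \<exists>E\<in>sets (M l). E \<subseteq> {\<omega>\<in>space (M l). P l \<omega>} \<and> measure (M l) E \<ge> 1 - \<delta>"
    using H
  proof eventually_elim
    case (elim l)
    from elim(2) obtain E where E1: "E \<in> sets (M l)" and
      E2: "E \<subseteq> {\<omega>\<in>space (M l). P l \<omega>} \<and> measure (M l) E \<ge> 1 - f l" by (rule bexE)
    have "measure (M l) E \<ge> 1 - \<delta>" using E2 elim(1) by linarith
    then show ?case using E1 E2 by blast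
  qed
qed

lemma to_one':
  assumes H: "\<forall>\<^sub>F l in at_top. \<exists>E\<in>sets (M l). E \<subseteq> {\<omega>\<in>space (M l). Q l \<omega>} \<and> measure (M l) E \<ge> 1 - f l"
    and f: "(f \<longlongrightarrow> 0) at_top" and imp: "\<And>l \<omega>. Q l \<omega> \<Longrightarrow> P l \<omega>"
  shows "prob_to_one M P"
proof (rule to_one[OF _ f])
  show "\<forall>\<^sub>F l in at_top. \<exists>E\<in>sets (M l). E \<subseteq> {\<omega>\<in>space (M l). P l \<omega>} \<and> measure (M l) E \<ge> 1 - f l"
    using H
  proof eventually_elim
    case (elim l)
    from elim obtain E where E1: "E \<in> sets (M l)" and
      E2: "E \<subseteq> {\<omega>\<in>space (M l). Q l \<omega>} \<and> measure (M l) E \<ge> 1 - f l" by (rule bexE)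
    have "E \<subseteq> {\<omega>\<in>space (M l). P l \<omega>}" using E2 imp by blast
    then show ?case using E1 E2 by blast
  qed
qed

lemma shell_far: "norm x \<le> 1 - e \<or> norm x \<ge> 1 + e" if "x \<notin> shell e" for x :: "'a::euclidean_space" and e
proof -
  have "x \<notin> sphere 0 1" "x \<notin> shell_in e" "x \<notin> shell_out e" using that unfolding shell_def by blast+
  then have "norm x \<noteq> 1" "\<not> (1 - e < norm x \<and> norm x < 1)" "\<not> (1 < norm x \<and> norm x < 1 + e)"
    by (simp_all add: shell_in_def shell_out_def)
  then show ?thesis by linarith
qed
lemma shin_far: "norm x \<le> 1 - e" if "x \<notin> shell_in e" "norm x \<le> 1" "norm x \<noteq> 1" for x :: "'a::euclidean_space" and e
proof -
  have "\<not> (1 - e < norm x \<and> norm x < 1)" using that(1) by (simp add: shell_in_def)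
  then show ?thesis using that by linarith
qed
lemma shin_sub: "shell_in e \<subseteq> (shell e :: 'a::euclidean_space set)" unfolding shell_def by blast

lemma sepP_mono: "sepP r A \<Longrightarrow> A \<subseteq> B \<Longrightarrow> sepP r B"
  unfolding sepP_def by blast

lemma ev_basic: "\<forall>\<^sub>F l in at_top. l > 1 \<and> eps_lam l \<le> 1 \<and> eps_lam l > 0"
proof -
  have "\<forall>\<^sub>F l in at_top. eps_lam l < 1" using order_tendstoD(2)[OF asym1] by simp
  moreover have "\<forall>\<^sub>F l::real in at_top. l > 1" by (rule eventually_gt_at_top)
  ultimately show ?thesis
  proof eventually_elim
    case (elim l)
    have "ln l > 0" using elim by simp
    then show ?case using elim by (simp add: eps_lam_def)
  qed
qed




theorem mainTheorem11:
  fixes M :: "real \<Rightarrow> 'b measure" and X :: "real \<Rightarrow> 'b \<Rightarrow> 'a::euclidean_space set"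
    and N :: "real \<Rightarrow> 'c measure" and C :: "real \<Rightarrow> 'c \<Rightarrow> 'a set"
  assumes "DIM('a) \<ge> 2"
    and "\<And>l. l > 0 \<Longrightarrow> poisson_pp (M l) (X l) UNIV (l / 2)"
    and "\<And>l. l > 0 \<Longrightarrow> poisson_pp (N l) (C l) (cball 0 1) l"
  shows "prob_to_one M (\<lambda>l \<omega>. tess_cell (X l \<omega> \<inter> shell (2 * eps_lam l)) = tess_cell (X l \<omega>)) \<and>
      prob_to_one N (\<lambda>l \<omega>. inter_cell (C l \<omega> \<inter> shell_in (2 * eps_lam l)) = inter_cell (C l \<omega>)) \<and>
      prob_to_one M (\<lambda>l \<omega>. tess_cell (X l \<omega>) \<subseteq> ball 0 (2 * eps_lam l)) \<and>
      prob_to_one N (\<lambda>l \<omega>. inter_cell (C l \<omega>) \<subseteq> ball 0 (2 * eps_lam l))"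
proof -
  note ppM = assms(2) and ppN = assms(3)
  obtain U where U: "finite U" "U \<subseteq> sphere (0::'a) 1" "\<forall>v\<in>sphere 0 1. \<exists>u\<in>U. norm (v - u) < 1/4"
    using net by blast
  define k where "k = kap TYPE('a)"
  have k: "k > 0" unfolding k_def by (rule kap_pos)
  define f where "f l = real (card U) * exp (- ((k/2) * (ln l)^2))" for l
  have f: "(f \<longlongrightarrow> 0) at_top"
    unfolding f_def using tendsto_mult_right_zero[OF asym2[of "k/2"]] k by simp
  have idM: "l / 2 * (k * eps_lam l) = (k/2) * (ln l)^2" if "l > 0" for l
    using that by (simp add: eps_lam_def field_simps)
  have idN: "l * (k * eps_lam l) = k * (ln l)^2" if "l > 0" for l
    using that by (simp add: eps_lam_def field_simps)
  have HM: "\<forall>\<^sub>F l in at_top. \<exists>E\<in>sets (M l). E \<subseteq> {\<omega>\<in>space (M l). l > 1 \<and> eps_lam l \<le> 1 \<and> eps_lam l > 0 \<and>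
      sepP (eps_lam l) (X l \<omega> \<inter> shell_in (2 * eps_lam l))} \<and> measure (M l) E \<ge> 1 - f l"
    using ev_basic
  proof eventually_elim
    case (elim l)
    have pp: "poisson_pp (M l) (X l) UNIV (l / 2)" using ppM elim by simp
    from PP[OF pp _ _ U, of "eps_lam l" "{}"] elim
    obtain E where E1: "E \<in> sets (M l)" and
      E2: "E \<subseteq> {\<omega>\<in>space (M l). sepP (eps_lam l) (X l \<omega> \<inter> shell_in (2 * eps_lam l)) \<and> X l \<omega> \<inter> {} = {}} \<and>
        measure (M l) E \<ge> 1 - card U * exp (- (l / 2 * (kap TYPE('a) * eps_lam l)))"
      by (auto elim!: bexE)
    have eq: "exp (- (l / 2 * (kap TYPE('a) * eps_lam l))) = exp (- ((k/2) * (ln l)^2))"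
      using idM[of l] elim by (simp add: k_def)
    have "measure (M l) E \<ge> 1 - f l" using conjunct2[OF E2] unfolding f_def eq .
    moreover have "E \<subseteq> {\<omega>\<in>space (M l). l > 1 \<and> eps_lam l \<le> 1 \<and> eps_lam l > 0 \<and>
      sepP (eps_lam l) (X l \<omega> \<inter> shell_in (2 * eps_lam l))}"
    proof
      fix \<omega> assume w: "\<omega> \<in> E"
      have "\<omega> \<in> space (M l) \<and> sepP (eps_lam l) (X l \<omega> \<inter> shell_in (2 * eps_lam l))"
        using conjunct1[OF E2] w by blast
      then show "\<omega> \<in> {\<omega>\<in>space (M l). l > 1 \<and> eps_lam l \<le> 1 \<and> eps_lam l > 0 \<and>
      sepP (eps_lam l) (X l \<omega> \<inter> shell_in (2 * eps_lam l))}" using elim by simp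
    qed
    ultimately show ?case by (intro bexI[OF _ E1] conjI)
  qed
  have HN: "\<forall>\<^sub>F l in at_top. \<exists>E\<in>sets (N l). E \<subseteq> {\<omega>\<in>space (N l). l > 1 \<and> eps_lam l \<le> 1 \<and> eps_lam l > 0 \<and>
      sepP (eps_lam l) (C l \<omega> \<inter> shell_in (2 * eps_lam l)) \<and> C l \<omega> \<inter> sphere 0 1 = {} \<and> C l \<omega> \<subseteq> cball 0 1}
      \<and> measure (N l) E \<ge> 1 - f l"
    using ev_basic
  proof eventually_elim
    case (elim l)
    have pp: "poisson_pp (N l) (C l) (cball 0 1) l" using ppN elim by simp
    have sub: "\<And>\<omega>. \<omega> \<in> space (N l) \<Longrightarrow> C l \<omega> \<subseteq> cball 0 1" using pp by (simp add: poisson_pp_def)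
    have B: "sphere (0::'a) 1 \<in> sets borel" "bounded (sphere (0::'a) 1)" "sphere (0::'a) 1 \<subseteq> cball 0 1"
      by auto
    from PP[OF pp _ _ U _ _ B sphere_null, of "eps_lam l"] elim
    obtain E where E1: "E \<in> sets (N l)" and
      E2: "E \<subseteq> {\<omega>\<in>space (N l). sepP (eps_lam l) (C l \<omega> \<inter> shell_in (2 * eps_lam l)) \<and> C l \<omega> \<inter> sphere 0 1 = {}} \<and>
        measure (N l) E \<ge> 1 - card U * exp (- (l * (kap TYPE('a) * eps_lam l)))"
      by (auto elim!: bexE)
    have "exp (- (l * (kap TYPE('a) * eps_lam l))) \<le> exp (- ((k/2) * (ln l)^2))"
    proof -
      have e1: "l * (kap TYPE('a) * eps_lam l) = k * (ln l)^2" using idN[of l] elim by (simp add: k_def)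
      have "(k/2) * (ln l)^2 \<le> k * (ln l)^2" using k by simp
      then show ?thesis unfolding e1 by simp
    qed
    hence "real (card U) * exp (- (l * (kap TYPE('a) * eps_lam l))) \<le> f l"
      unfolding f_def by (intro mult_left_mono) auto
    hence "measure (N l) E \<ge> 1 - f l" using E2 by linarith
    moreover have "E \<subseteq> {\<omega>\<in>space (N l). l > 1 \<and> eps_lam l \<le> 1 \<and> eps_lam l > 0 \<and>
      sepP (eps_lam l) (C l \<omega> \<inter> shell_in (2 * eps_lam l)) \<and> C l \<omega> \<inter> sphere 0 1 = {} \<and> C l \<omega> \<subseteq> cball 0 1}"
    proof
      fix \<omega> assume w: "\<omega> \<in> E"
      have "\<omega> \<in> space (N l) \<and> sepP (eps_lam l) (C l \<omega> \<inter> shell_in (2 * eps_lam l)) \<and> C l \<omega> \<inter> sphere 0 1 = {}"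
        using conjunct1[OF E2] w by blast
      moreover have "C l \<omega> \<subseteq> cball 0 1" using sub calculation by blast
      ultimately show "\<omega> \<in> {\<omega>\<in>space (N l). l > 1 \<and> eps_lam l \<le> 1 \<and> eps_lam l > 0 \<and>
      sepP (eps_lam l) (C l \<omega> \<inter> shell_in (2 * eps_lam l)) \<and> C l \<omega> \<inter> sphere 0 1 = {} \<and> C l \<omega> \<subseteq> cball 0 1}"
        using elim by (simp only: mem_Collect_eq)
    qed
    ultimately show ?case by (intro bexI[OF _ E1] conjI)
  qed
  have i1: "tess_cell (X l \<omega> \<inter> shell (2 * eps_lam l)) = tess_cell (X l \<omega>)"
    if that: "l > 1 \<and> eps_lam l \<le> 1 \<and> eps_lam l > 0 \<and> sepP (eps_lam l) (X l \<omega> \<inter> shell_in (2 * eps_lam l))" for l \<omega>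
  proof -
    have sp: "sepP (eps_lam l) (X l \<omega> \<inter> shell_in (2 * eps_lam l))" using that by (elim conjE)
    have "X l \<omega> \<inter> shell_in (2 * eps_lam l) \<subseteq> X l \<omega> \<inter> shell (2 * eps_lam l)"
      using shin_sub[of "2 * eps_lam l"] by blast
    hence sp2: "sepP (eps_lam l) (X l \<omega> \<inter> shell (2 * eps_lam l))" by (rule sepP_mono[OF sp])
    have pos: "eps_lam l > 0" using that by (elim conjE)
    hence le: "eps_lam l \<le> 2 * eps_lam l" by simp
    have far: "norm x \<le> 1 - 2 * eps_lam l \<or> norm x \<ge> 1 + 2 * eps_lam l"
      if "x \<in> X l \<omega>" "x \<notin> X l \<omega> \<inter> shell (2 * eps_lam l)" for x
    proof -
      have "x \<notin> shell (2 * eps_lam l)" using that by blast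
      then show ?thesis by (rule shell_far)
    qed
    show ?thesis by (rule tess_eq[OF pos sp2 Int_lower1 le far])
  qed
  have i3: "tess_cell (X l \<omega>) \<subseteq> ball 0 (2 * eps_lam l)"
    if that: "l > 1 \<and> eps_lam l \<le> 1 \<and> eps_lam l > 0 \<and> sepP (eps_lam l) (X l \<omega> \<inter> shell_in (2 * eps_lam l))" for l \<omega>
  proof -
    have sp: "sepP (eps_lam l) (X l \<omega> \<inter> shell_in (2 * eps_lam l))" using that by (elim conjE)
    have pos: "eps_lam l > 0" using that by (elim conjE)
    have sp2: "sepP (eps_lam l) (X l \<omega>)" by (rule sepP_mono[OF sp Int_lower1])
    have "tess_cell (X l \<omega>) \<subseteq> cball 0 (eps_lam l)" by (rule tess_small[OF pos sp2])
    also have "\<dots> \<subseteq> ball 0 (2 * eps_lam l)" using pos by (intro cball_subset_ball_iff[THEN iffD2]) simp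
    finally show ?thesis .
  qed
  have i2: "inter_cell (C l \<omega> \<inter> shell_in (2 * eps_lam l)) = inter_cell (C l \<omega>)"
    if T: "l > 1 \<and> eps_lam l \<le> 1 \<and> eps_lam l > 0 \<and>
      sepP (eps_lam l) (C l \<omega> \<inter> shell_in (2 * eps_lam l)) \<and> C l \<omega> \<inter> sphere 0 1 = {} \<and> C l \<omega> \<subseteq> cball 0 1" for l \<omega>
  proof -
    have sp: "sepP (eps_lam l) (C l \<omega> \<inter> shell_in (2 * eps_lam l))" using T by (elim conjE)
    have pos: "eps_lam l > 0" using T by (elim conjE)
    have sph: "C l \<omega> \<inter> sphere 0 1 = {}" using T by (elim conjE)
    have sub: "C l \<omega> \<subseteq> cball 0 1" using T by (elim conjE)
    have le: "eps_lam l \<le> 2 * eps_lam l" using pos by simp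
    have far: "norm x \<le> 1 - 2 * eps_lam l"
      if x: "x \<in> C l \<omega>" "x \<notin> C l \<omega> \<inter> shell_in (2 * eps_lam l)" for x
    proof -
      have "x \<notin> shell_in (2 * eps_lam l)" using x by blast
      moreover have "norm x \<le> 1" using x sub by (auto simp: dist_norm)
      moreover have "norm x \<noteq> 1" using x sph by (auto simp: dist_norm)
      ultimately show ?thesis by (rule shin_far)
    qed
    show ?thesis by (rule inter_eq[OF pos sp Int_lower1 sub le far])
  qed
  have i4: "inter_cell (C l \<omega>) \<subseteq> ball 0 (2 * eps_lam l)"
    if T: "l > 1 \<and> eps_lam l \<le> 1 \<and> eps_lam l > 0 \<and>
      sepP (eps_lam l) (C l \<omega> \<inter> shell_in (2 * eps_lam l)) \<and> C l \<omega> \<inter> sphere 0 1 = {} \<and> C l \<omega> \<subseteq> cball 0 1" for l \<omega>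
  proof -
    have sp: "sepP (eps_lam l) (C l \<omega> \<inter> shell_in (2 * eps_lam l))" using T by (elim conjE)
    have pos: "eps_lam l > 0" using T by (elim conjE)
    have sub: "C l \<omega> \<subseteq> cball 0 1" using T by (elim conjE)
    have sp2: "sepP (eps_lam l) (C l \<omega>)" by (rule sepP_mono[OF sp Int_lower1])
    have "inter_cell (C l \<omega>) \<subseteq> ball 0 (eps_lam l)" by (rule inter_small[OF pos sp2 sub])
    also have "\<dots> \<subseteq> ball 0 (2 * eps_lam l)" using pos by (intro subset_ball) simp
    finally show ?thesis .
  qed
  note c1 = to_one'[OF HM f i1]
  note c2 = to_one'[OF HN f i2]
  note c3 = to_one'[OF HM f i3]
  note c4 = to_one'[OF HN f i4]
  show ?thesis using c1 c2 c3 c4 by (intro conjI)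
qed


end
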